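(* For every point set $X$ that is a permutation, $\mathrm{cGB}(X)\le \mathrm{WB}(X)+\mathrm{WB}'(X)$.
   Context: $X$ is a set of $n$ points that is a permutation, with $x$-coordinates $\{1,\dots,n\}$ and $y$-coordinates $\{1,\dots,n\}$; $B$ is a bounding box of $X$. Let $\mathcal L^V$ ($\mathcal L^H$) be the vertical (horizontal) lines with half-integral coordinate between $1/2$ and $n-1/2$. $\mathrm{WB}(X)$: for an ordering $\sigma$ of $\mathcal L^V$, process lines in order starting from $\{B\}$; each line $L$ splits the current vertical strip $S$ containing it and is charged the number of pairs of points of $X\cap S$ consecutive in increasing $y$-order that lie on opposite sides of $L$; $\mathrm{WB}_\sigma(X)$ is the total charge and $\mathrm{WB}(X)=\max_\sigma\mathrm{WB}_\sigma(X)$. $\mathrm{WB}'(X)$ is defined symmetrically with horizontal lines: for orderings of $\mathcal L^H$, each line splits the current horizontal strip containing it and is charged the number of pairs of points of the strip consecutive in increasing $x$-order lying on opposite sides; maximize over orderings (equivalently, $\mathrm{WB}'(X)=\mathrm{WB}$ of $X$ rotated by $90^\circ$). $\mathrm{cGB}(X)$: for an ordering $\sigma$ of $\mathcal L^V\cup\mathcal L^H$, start with $\mathcal P=\{B\}$ and process lines in order; when $L$ is processed every rectangle $P\in\mathcal P$ intersecting $L$ is replaced by the two rectangles into which $L$ splits it, costing the number of pairs of points of $X\cap P$ consecutive in increasing $y$-order (if $L$ vertical) or in increasing $x$-order (if $L$ horizontal) lying on opposite sides of $L$. $\mathrm{cGB}_\sigma(X)$ is the total cost and $\mathrm{cGB}(X)=\max_\sigma\mathrm{cGB}_\sigma(X)$.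 *)

theory Defs
  imports Main
begin

definition is_perm_set :: "nat \<Rightarrow> (nat \<times> nat) set \<Rightarrow> bool" where
  "is_perm_set n X \<longleftrightarrow> card X = n \<and> fst ` X = {1..n} \<and> snd ` X = {1..n}"

text \<open>Lines: VL k is the vertical line x = k - 1/2, HL k the horizontal line y = k - 1/2.\<close>
datatype line = VL nat | HL nat

definition linesV :: "nat \<Rightarrow> line set" where
  "linesV n = VL ` {1..n}"

definition linesH :: "nat \<Rightarrow> line set" where
  "linesH n = HL ` {1..n}"

fun same_side :: "line \<Rightarrow> nat \<times> nat \<Rightarrow> nat \<times> nat \<Rightarrow> bool" where
  "same_side (VL k) p q = (fst p < k \<longleftrightarrow> fst q < k)"
| "same_side (HL k) p q = (snd p < k \<longleftrightarrow> snd q < k)"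

text \<open>Point contents of the (nonempty) rectangles of the partition induced by the
  already processed lines D.\<close>
definition cells :: "(nat \<times> nat) set \<Rightarrow> line set \<Rightarrow> (nat \<times> nat) set set" where
  "cells X D = (\<lambda>p. {q \<in> X. \<forall>l \<in> D. same_side l p q}) ` X"

fun sep :: "(nat \<times> nat) set \<Rightarrow> line \<Rightarrow> nat" where
  "sep P (VL k) = card {(p, q). p \<in> P \<and> q \<in> P \<and> snd p < snd q \<and>
        \<not> (\<exists>r \<in> P. snd p < snd r \<and> snd r < snd q) \<and> \<not> same_side (VL k) p q}"
| "sep P (HL k) = card {(p, q). p \<in> P \<and> q \<in> P \<and> fst p < fst q \<and>
        \<not> (\<exists>r \<in> P. fst p < fst r \<and> fst r < fst q) \<and> \<not> same_side (HL k) p q}"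

text \<open>Cost of processing line L when lines D were processed before: every rectangle
  is split (rectangles not meeting L have all points on one side and cost 0).\<close>
definition step_cost :: "(nat \<times> nat) set \<Rightarrow> line set \<Rightarrow> line \<Rightarrow> nat" where
  "step_cost X D L = (\<Sum>P \<in> cells X D. sep P L)"

definition order_cost :: "(nat \<times> nat) set \<Rightarrow> line list \<Rightarrow> nat" where
  "order_cost X \<sigma> = (\<Sum>i < length \<sigma>. step_cost X (set (take i \<sigma>)) (\<sigma> ! i))"

definition max_cost :: "(nat \<times> nat) set \<Rightarrow> line set \<Rightarrow> nat" where
  "max_cost X Ls = Max {order_cost X \<sigma> | \<sigma>. distinct \<sigma> \<and> set \<sigma> = Ls}"

text \<open>With only vertical (resp. horizontal) lines, the cells are exactly the strips.\<close>
definition WB :: "nat \<Rightarrow> (nat \<times> nat) set \<Rightarrow> nat" where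
  "WB n X = max_cost X (linesV n)"

definition WB' :: "nat \<Rightarrow> (nat \<times> nat) set \<Rightarrow> nat" where
  "WB' n X = max_cost X (linesH n)"

definition cGB :: "nat \<Rightarrow> (nat \<times> nat) set \<Rightarrow> nat" where
  "cGB n X = max_cost X (linesV n \<union> linesH n)"

end

theory Submission
  imports Defs
begin

fun isV :: "line \<Rightarrow> bool" where
  "isV (VL _) = True" | "isV (HL _) = False"

fun key :: "line \<Rightarrow> nat \<times> nat \<Rightarrow> nat" where
  "key (VL _) = snd" | "key (HL _) = fst"

definition prs :: "(nat \<times> nat) set \<Rightarrow> line \<Rightarrow> ((nat \<times> nat) \<times> (nat \<times> nat)) set" where
  "prs P L = {(p, q). p \<in> P \<and> q \<in> P \<and> key L p < key L q \<and>
        \<not> (\<exists>r \<in> P. key L p < key L r \<and> key L r < key L q) \<and> \<not> same_side L p q}"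

lemma sep_eq: "sep P L = card (prs P L)"
  by (cases L) (simp_all add: prs_def)

definition cls :: "(nat \<times> nat) set \<Rightarrow> line set \<Rightarrow> nat \<times> nat \<Rightarrow> (nat \<times> nat) set" where
  "cls X D p = {q \<in> X. \<forall>l \<in> D. same_side l p q}"

lemma cells_cls: "cells X D = cls X D ` X"
  by (simp add: cells_def cls_def)

lemma ss_refl: "same_side l p p"
  by (cases l) auto

lemma ss_trans: "same_side l a b \<Longrightarrow> same_side l a c = same_side l b c"
  by (cases l) auto

lemma ss_between: "isV l \<noteq> isV L \<Longrightarrow> key L p < key L r \<Longrightarrow> key L r < key L q
  \<Longrightarrow> same_side l p q \<Longrightarrow> same_side l p r"
  by (cases l; cases L) auto

lemma cls_eq: "p \<in> cls X D a \<Longrightarrow> cls X D p = cls X D a"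
  unfolding cls_def using ss_trans by blast

lemma prs_sub: "prs P L \<subseteq> P \<times> P"
  by (auto simp: prs_def)

lemma step_card:
  assumes "finite X"
  shows "step_cost X D L = card (\<Union>P \<in> cells X D. prs P L)"
proof -
  have fc: "finite (cells X D)" using assms by (simp add: cells_cls)
  have fp: "\<forall>P \<in> cells X D. finite (prs P L)"
  proof
    fix P assume "P \<in> cells X D"
    then have "P \<subseteq> X" by (auto simp: cells_cls cls_def)
    then show "finite (prs P L)" using prs_sub[of P L] assms
      by (meson finite_SigmaI finite_subset)
  qed
  have dj: "\<forall>P \<in> cells X D. \<forall>P' \<in> cells X D. P \<noteq> P' \<longrightarrow> prs P L \<inter> prs P' L = {}"
  proof (intro ballI impI)
    fix P P' assume a: "P \<in> cells X D" "P' \<in> cells X D" "P \<noteq> P'"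
    show "prs P L \<inter> prs P' L = {}"
    proof (rule ccontr)
      assume "prs P L \<inter> prs P' L \<noteq> {}"
      then obtain p q where "(p,q) \<in> prs P L" "(p,q) \<in> prs P' L" by auto
      then have "p \<in> P" "p \<in> P'" by (auto simp: prs_def)
      then show False using a cls_eq unfolding cells_cls by (metis imageE)
    qed
  qed
  show ?thesis unfolding step_cost_def sep_eq
    using card_UN_disjoint[OF fc, of "\<lambda>P. prs P L"] fp dj by simp
qed

lemma step_mono:
  assumes fX: "finite X" and sub: "D' \<subseteq> D" and oth: "\<forall>l \<in> D - D'. isV l \<noteq> isV L"
  shows "step_cost X D L \<le> step_cost X D' L"
proof -
  have "(\<Union>P \<in> cells X D. prs P L) \<subseteq> (\<Union>S \<in> cells X D'. prs S L)"
  proof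
    fix x assume "x \<in> (\<Union>P \<in> cells X D. prs P L)"
    then obtain a where aX: "a \<in> X" and xin: "x \<in> prs (cls X D a) L"
      by (auto simp: cells_cls)
    obtain p q where x: "x = (p,q)" by (cases x)
    have pq: "(p,q) \<in> prs (cls X D a) L" using xin x by simp
    let ?P = "cls X D a"
    let ?S = "cls X D' p"
    have pP: "p \<in> ?P" and qP: "q \<in> ?P" and kpq: "key L p < key L q"
      and nr: "\<not> (\<exists>r \<in> ?P. key L p < key L r \<and> key L r < key L q)"
      and ns: "\<not> same_side L p q"
      using pq by (auto simp: prs_def)
    have pX: "p \<in> X" using pP by (simp add: cls_def)
    have apD: "\<forall>l\<in>D. same_side l a p" using pP by (simp add: cls_def)
    have aqD: "\<forall>l\<in>D. same_side l a q" using qP by (simp add: cls_def)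
    have pqD: "\<forall>l\<in>D. same_side l p q" using apD aqD ss_trans by blast
    have pS: "p \<in> ?S" using pX ss_refl by (simp add: cls_def)
    have qS: "q \<in> ?S" using qP pqD sub by (auto simp: cls_def)
    have nrS: "\<not> (\<exists>r \<in> ?S. key L p < key L r \<and> key L r < key L q)"
    proof
      assume "\<exists>r \<in> ?S. key L p < key L r \<and> key L r < key L q"
      then obtain r where rS: "r \<in> ?S" and k1: "key L p < key L r" and k2: "key L r < key L q"
        by blast
      have "r \<in> ?P"
        unfolding cls_def
      proof (intro CollectI conjI ballI)
        show "r \<in> X" using rS by (simp add: cls_def)
      next
        fix l assume lD: "l \<in> D"
        have "same_side l p r"
        proof (cases "l \<in> D'")
          case True then show ?thesis using rS by (simp add: cls_def)
        next
          case False then show ?thesis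
            using oth lD ss_between[OF _ k1 k2] pqD by blast
        qed
        then show "same_side l a r" using apD lD ss_trans by blast
      qed
      then show False using nr k1 k2 by blast
    qed
    have "(p,q) \<in> prs ?S L" using pS qS kpq nrS ns by (simp add: prs_def)
    moreover have "?S \<in> cells X D'" using pX by (simp add: cells_cls)
    ultimately show "x \<in> (\<Union>S \<in> cells X D'. prs S L)" using x by blast
  qed
  moreover have "finite (\<Union>S \<in> cells X D'. prs S L)"
  proof (rule finite_subset)
    show "(\<Union>S \<in> cells X D'. prs S L) \<subseteq> X \<times> X"
      using prs_sub by (fastforce simp: cells_cls cls_def)
    show "finite (X \<times> X)" using fX by simp
  qed
  ultimately show ?thesis using step_card[OF fX] card_mono by metis
qed

fun fc :: "(nat \<times> nat) set \<Rightarrow> line set \<Rightarrow> line list \<Rightarrow> nat" where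
  "fc X D [] = 0"
| "fc X D (a # s) = step_cost X D a + fc X (insert a D) s"

lemma fc_sum: "fc X D s = (\<Sum>i < length s. step_cost X (D \<union> set (take i s)) (s ! i))"
proof (induction s arbitrary: D)
  case Nil then show ?case by simp
next
  case (Cons a s)
  show ?case
    unfolding fc.simps Cons.IH length_Cons sum.lessThan_Suc_shift
    by simp
qed

lemma order_fc: "order_cost X s = fc X {} s"
  by (simp add: order_cost_def fc_sum)

lemma fc_split:
  assumes "finite X"
  shows "fc X D s \<le> fc X {l \<in> D. isV l} (filter isV s) + fc X {l \<in> D. \<not> isV l} (filter (\<lambda>l. \<not> isV l) s)"
proof (induction s arbitrary: D)
  case Nil then show ?case by simp
next
  case (Cons a s)
  show ?case
  proof (cases "isV a")
    case True
    have "step_cost X D a \<le> step_cost X {l \<in> D. isV l} a"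
      by (rule step_mono[OF assms]) (auto simp: True)
    moreover have e1: "{l \<in> insert a D. isV l} = insert a {l \<in> D. isV l}"
      and e2: "{l \<in> insert a D. \<not> isV l} = {l \<in> D. \<not> isV l}" using True by auto
    moreover have "fc X (insert a D) s \<le> fc X (insert a {l \<in> D. isV l}) (filter isV s) + fc X {l \<in> D. \<not> isV l} (filter (\<lambda>l. \<not> isV l) s)"
      using Cons.IH[of "insert a D"] unfolding e1 e2 .
    ultimately show ?thesis using True by simp
  next
    case False
    have "step_cost X D a \<le> step_cost X {l \<in> D. \<not> isV l} a"
      by (rule step_mono[OF assms]) (auto simp: False)
    moreover have e1: "{l \<in> insert a D. \<not> isV l} = insert a {l \<in> D. \<not> isV l}"
      and e2: "{l \<in> insert a D. isV l} = {l \<in> D. isV l}" using False by auto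
    moreover have "fc X (insert a D) s \<le> fc X {l \<in> D. isV l} (filter isV s) + fc X (insert a {l \<in> D. \<not> isV l}) (filter (\<lambda>l. \<not> isV l) s)"
      using Cons.IH[of "insert a D"] unfolding e1 e2 .
    ultimately show ?thesis using False by simp
  qed
qed

lemma fin_orders: "finite Ls \<Longrightarrow> finite {order_cost X \<sigma> | \<sigma>. distinct \<sigma> \<and> set \<sigma> = Ls}"
proof -
  assume f: "finite Ls"
  have "{\<sigma>. distinct \<sigma> \<and> set \<sigma> = Ls} \<subseteq> {\<sigma>. set \<sigma> \<subseteq> Ls \<and> length \<sigma> \<le> card Ls}"
    using distinct_card by fastforce
  moreover have "finite {\<sigma>. set \<sigma> \<subseteq> Ls \<and> length \<sigma> \<le> card Ls}"
    using finite_lists_length_le[OF f] by simp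
  ultimately have "finite {\<sigma>. distinct \<sigma> \<and> set \<sigma> = Ls}" by (rule finite_subset)
  then have "finite ((order_cost X) ` {\<sigma>. distinct \<sigma> \<and> set \<sigma> = Ls})" by simp
  moreover have "(order_cost X) ` {\<sigma>. distinct \<sigma> \<and> set \<sigma> = Ls} = {order_cost X \<sigma> | \<sigma>. distinct \<sigma> \<and> set \<sigma> = Ls}"
    by auto
  ultimately show ?thesis by simp
qed

lemma le_max: "finite Ls \<Longrightarrow> distinct \<sigma> \<Longrightarrow> set \<sigma> = Ls \<Longrightarrow> order_cost X \<sigma> \<le> max_cost X Ls"
  unfolding max_cost_def by (rule Max_ge[OF fin_orders]) auto

lemma max_attained: "finite Ls \<Longrightarrow> \<exists>\<sigma>. distinct \<sigma> \<and> set \<sigma> = Ls \<and> max_cost X Ls = order_cost X \<sigma>"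
proof -
  assume f: "finite Ls"
  obtain s where "distinct s" "set s = Ls" using finite_distinct_list[OF f] by blast
  then have ne: "{order_cost X \<sigma> | \<sigma>. distinct \<sigma> \<and> set \<sigma> = Ls} \<noteq> {}" by blast
  show ?thesis using Max_in[OF fin_orders[OF f] ne] unfolding max_cost_def by blast
qed

theorem lemma5p2:
  fixes n :: nat and X :: "(nat \<times> nat) set"
  assumes "is_perm_set n X"
  shows "cGB n X \<le> WB n X + WB' n X"
proof -
  have fX: "finite X"
  proof (cases "n = 0")
    case True
    then have "fst ` X = {}" using assms by (simp add: is_perm_set_def)
    then show ?thesis by simp
  next
    case False
    then have "card X \<noteq> 0" using assms by (simp add: is_perm_set_def)
    then show ?thesis by (meson card.infinite)
  qed
  have fV: "finite (linesV n)" and fH: "finite (linesH n)" by (simp_all add: linesV_def linesH_def)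
  obtain \<sigma> where d: "distinct \<sigma>" and s: "set \<sigma> = linesV n \<union> linesH n"
    and m: "cGB n X = order_cost X \<sigma>"
    using max_attained[of "linesV n \<union> linesH n" X] fV fH unfolding cGB_def by blast
  have sv: "set (filter isV \<sigma>) = linesV n"
  proof -
    have "set (filter isV \<sigma>) = {l \<in> linesV n \<union> linesH n. isV l}" using s by simp
    also have "\<dots> = linesV n" by (auto simp: linesV_def linesH_def)
    finally show ?thesis .
  qed
  have sh: "set (filter (\<lambda>l. \<not> isV l) \<sigma>) = linesH n"
  proof -
    have "set (filter (\<lambda>l. \<not> isV l) \<sigma>) = {l \<in> linesV n \<union> linesH n. (\<lambda>l. \<not> isV l) l}" using s by simp
    also have "\<dots> = linesH n" by (auto simp: linesV_def linesH_def)
    finally show ?thesis .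
  qed
  have "order_cost X \<sigma> \<le> order_cost X (filter isV \<sigma>) + order_cost X (filter (\<lambda>l. \<not> isV l) \<sigma>)"
    using fc_split[OF fX, of "{}" \<sigma>] by (simp add: order_fc)
  also have "\<dots> \<le> WB n X + WB' n X"
    unfolding WB_def WB'_def
    using le_max[OF fV _ sv] le_max[OF fH _ sh] d by (simp add: add_mono)
  finally show ?thesis using m by simp
qed

end
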